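(* Let $M=15$. For any integers $i,j\ge1$ and any $J\in\mathcal D_i$, the set $J\cap\widehat Q_i^j$ is a union of at most $M$ intervals in $\mathcal D_{i+j}$. Consequently, $\widehat Q_i^j$ consists of at most $M2^i$ intervals in $\mathcal D_{i+j}$, and $|Q_i^j|\le|\widehat Q_i^j|\le M2^{-j}$.
   Context: $\mathbb T=\mathbb R/\mathbb Z\cong[0,1)$, $Tx=2x\bmod1$, $d(t,s)=\|t-s\|$ the distance on $\mathbb T$. $\mathcal D_k$ is the collection of dyadic intervals $[m/2^k,(m+1)/2^k)$, $0\le m<2^k$. For $i,j\ge1$, $Q_i^j=\{x\in\mathbb T:d(T^ix,x)\le2^{-j}\}$, and $\widehat Q_i^j$ is the union of all intervals in $\mathcal D_{i+j}$ that intersect $Q_i^j$. $|\cdot|$ denotes Lebesgue measure. *)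

theory Defs
  imports "HOL-Analysis.Analysis"
begin

text \<open>The circle T = R/Z is represented by its fundamental domain [0,1).\<close>

definition circ :: "real set" where
  "circ = {0..<1}"

definition dbl :: "real \<Rightarrow> real" where
  "dbl x = frac (2 * x)"

definition tdist :: "real \<Rightarrow> real \<Rightarrow> real" where
  "tdist t s = min (frac (t - s)) (1 - frac (t - s))"

definition dint :: "nat \<Rightarrow> nat \<Rightarrow> real set" where
  "dint k m = {real m / 2 ^ k ..< (real m + 1) / 2 ^ k}"

definition Dyad :: "nat \<Rightarrow> real set set" where
  "Dyad k = {dint k m | m. m < 2 ^ k}"

definition Q :: "nat \<Rightarrow> nat \<Rightarrow> real set" where
  "Q i j = {x \<in> circ. tdist ((dbl ^^ i) x) x \<le> 2 powi (- int j)}"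

definition Qhat :: "nat \<Rightarrow> nat \<Rightarrow> real set" where
  "Qhat i j = \<Union> {I \<in> Dyad (i + j). I \<inter> Q i j \<noteq> {}}"

end

theory Submission
  imports Defs
begin


lemma dbl_iter: "0 \<le> x \<Longrightarrow> x < 1 \<Longrightarrow> (dbl ^^ i) x = frac (2 ^ i * x)"
proof (induction i)
  case 0 thus ?case by (simp add: frac_eq)
next
  case (Suc i)
  have "frac (2 * frac (2 ^ i * x)) = frac (2 * (2 ^ i * x) + of_int (- 2 * \<lfloor>2 ^ i * x\<rfloor>))"
    unfolding frac_def by (simp add: algebra_simps)
  also have "\<dots> = frac (2 ^ Suc i * x)" by (simp only: frac_add_of_int_right) (simp add: mult.assoc)
  finally show ?case using Suc by (simp add: dbl_def)
qed

lemma Q_borel: "Q i j \<in> sets borel"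
proof -
  have "Q i j = {x::real. 0 \<le> x \<and> x < 1 \<and> tdist (frac (2^i*x)) x \<le> 2 powi (- int j)}"
    by (auto simp: Q_def circ_def dbl_iter)
  also have "\<dots> \<in> sets borel" unfolding tdist_def frac_def by measurable
  finally show ?thesis .
qed

lemma dint_lebesgue: "dint k m \<in> sets lebesgue" "measure lebesgue (dint k m) = 1 / 2^k"
proof -
  have b: "dint k m \<in> sets lborel" unfolding dint_def by simp
  thus "dint k m \<in> sets lebesgue" by simp
  have "measure lebesgue (dint k m) = measure lborel (dint k m)" using b by simp
  also have "\<dots> = 1/2^k" unfolding dint_def by (subst measure_lborel_Ico) (auto simp: divide_simps)
  finally show "measure lebesgue (dint k m) = 1 / 2^k" .
qed

lemma Q_char:
  assumes "x \<in> Q i j"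
  shows "0 \<le> x \<and> x < 1 \<and> (\<exists>p::int. \<bar>(2^i - 1) * x - p\<bar> \<le> 1 / 2^j)"
proof -
  define y where "y = frac (2^i * x) - x"
  have x: "0 \<le> x" "x < 1" and le: "min (frac y) (1 - frac y) \<le> 1/2^j"
    using assms by (auto simp: Q_def circ_def dbl_iter tdist_def y_def power_int_minus_divide)
  have ye: "y = (2^i - 1) * x - \<lfloor>2^i * x\<rfloor>" unfolding y_def frac_def by (simp add: algebra_simps)
  have fy: "frac y = y - \<lfloor>y\<rfloor>" "0 \<le> frac y" "frac y < 1"
    by (simp add: frac_def, simp, rule frac_lt_1)
  show ?thesis
  proof (cases "frac y \<le> 1/2^j")
    case True
    have "\<bar>(2^i - 1) * x - (\<lfloor>2^i * x\<rfloor> + \<lfloor>y\<rfloor>)\<bar> \<le> 1 / 2^j" using True fy ye by simp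
    thus ?thesis using x by blast
  next
    case False
    hence "1 - frac y \<le> 1/2^j" using le by linarith
    hence "\<bar>(2^i - 1) * x - (\<lfloor>2^i * x\<rfloor> + \<lfloor>y\<rfloor> + 1)\<bar> \<le> 1 / 2^j" using fy ye by simp
    thus ?thesis using x by blast
  qed
qed



lemma dint_mem: "x \<in> dint k m \<longleftrightarrow> real m / 2^k \<le> x \<and> x < (real m + 1) / 2^k"
  by (simp add: dint_def)

lemma circ_cover:
  assumes "0 \<le> x" "x < 1"
  shows "\<exists>m<2^k. x \<in> dint k m"
proof -
  define m where "m = nat \<lfloor>x * 2^k\<rfloor>"
  have f0: "0 \<le> \<lfloor>x * 2^k\<rfloor>" using assms by simp
  have rm: "real m = \<lfloor>x * 2^k\<rfloor>" using f0 unfolding m_def by simp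
  have "\<lfloor>x * 2^k\<rfloor> < 2^k"
  proof -
    have "x * 2^k < 2^k" using assms by simp
    hence "\<lfloor>x * 2^k\<rfloor> < \<lfloor>(2::real)^k\<rfloor>" by (metis floor_less_iff floor_of_int of_int_numeral of_int_power)
    thus ?thesis by (metis floor_of_int of_int_numeral of_int_power)
  qed
  hence "m < 2^k" unfolding m_def using f0 by (simp add: nat_less_iff)
  moreover have "x \<in> dint k m" unfolding dint_mem rm
    by (simp add: divide_simps)
  ultimately show ?thesis by blast
qed

lemma dyad_nest:
  assumes "x \<in> dint (i+j) m" "x \<in> dint i n"
  shows "dint (i+j) m \<subseteq> dint i n"
proof -
  define A :: real where "A = 2^i"
  define B :: real where "B = 2^j"
  have A: "A > 0" "B > 0" by (auto simp: A_def B_def)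
  have k: "(2::real)^(i+j) = A * B" by (simp add: A_def B_def power_add)
  have x1: "m / (A*B) \<le> x" "x < (m+1)/(A*B)" using assms(1) k by (auto simp: dint_mem add.commute)
  have x2: "n / A \<le> x" "x < (n+1)/A" using assms(2) by (auto simp: dint_mem A_def add.commute)
  have "m / (A*B) < (n+1)/A" using x1 x2 by linarith
  hence "real m < (n+1) * B" using A by (simp add: divide_simps mult.commute mult.left_commute)
  moreover have "real ((n+1) * 2^j) = (n+1)*B" by (simp add: B_def distrib_right)
  ultimately have "real m < real ((n+1) * 2^j)" by simp
  hence "m + 1 \<le> (n+1) * 2^j" by linarith
  hence "real (m + 1) \<le> real ((n+1) * 2^j)" by (simp only: of_nat_le_iff)
  hence "real m + 1 \<le> (n+1) * B" by (simp add: B_def distrib_right)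
  hence u: "(m+1)/(A*B) \<le> (n+1)/A" using A by (simp add: divide_simps mult.commute mult.left_commute)
  have "n / A < (m+1)/(A*B)" using x1 x2 by linarith
  hence "n * B < real m + 1" using A by (simp add: divide_simps mult.commute mult.left_commute)
  moreover have "real (n * 2^j) = n*B" by (simp add: B_def)
  moreover have "real (m+1) = real m + 1" by simp
  ultimately have "real (n * 2^j) < real (m + 1)" by linarith
  hence "n * 2^j \<le> m" by linarith
  hence "real (n * 2^j) \<le> real m" by (simp only: of_nat_le_iff)
  hence "n * B \<le> real m" by (simp add: B_def)
  hence l: "n / A \<le> m / (A*B)" using A by (simp add: divide_simps mult.commute mult.left_commute)
  show ?thesis
  proof
    fix y assume "y \<in> dint (i+j) m"
    hence "m / (A*B) \<le> y" "y < (m+1)/(A*B)" using k by (auto simp: dint_mem add.commute)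
    hence "n/A \<le> y" "y < (real n+1)/A" using u l by (auto simp: add.commute)
    thus "y \<in> dint i n" by (simp add: dint_mem A_def)
  qed
qed



lemma count_block:
  assumes "i \<ge> 1" "j \<ge> 1"
  shows "finite {m. dint (i+j) m \<inter> Q i j \<noteq> {} \<and> dint (i+j) m \<subseteq> dint i n}
       \<and> card {m. dint (i+j) m \<inter> Q i j \<noteq> {} \<and> dint (i+j) m \<subseteq> dint i n} \<le> 10"
proof -
  define S where "S = {m. dint (i+j) m \<inter> Q i j \<noteq> {} \<and> dint (i+j) m \<subseteq> dint i n}"
  define A :: real where "A = 2^i"
  define B :: real where "B = 2^j"
  define N :: real where "N = A - 1"
  define d :: real where "d = 1 / B"
  have A2: "A \<ge> 2" unfolding A_def using assms(1)
    by (metis power_increasing power_one_right numeral_le_one_iff semiring_norm(69) one_le_numeral)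
  have B2: "B \<ge> 2" unfolding B_def using assms(2)
    by (metis power_increasing power_one_right numeral_le_one_iff semiring_norm(69) one_le_numeral)
  have Npos: "N > 0" and NA: "N < A" and AN: "A \<le> 2 * N" using A2 by (auto simp: N_def)
  have d2: "2 * d \<le> 1" "d > 0" using B2 by (auto simp: d_def divide_simps)
  have dB: "d * B = 1" using B2 by (simp add: d_def)
  have k: "(2::real)^(i+j) = A * B" by (simp add: A_def B_def power_add)
  define p1 where "p1 = \<lceil>N * n / A - d\<rceil>"
  define c where "c = (\<lambda>p::int. (p - d) * (A * B) / N)"
  define T where "T = {\<lfloor>c p1\<rfloor>..<\<lfloor>c p1\<rfloor>+5} \<union> {\<lfloor>c (p1+1)\<rfloor>..<\<lfloor>c (p1+1)\<rfloor>+5}"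
  have fT: "finite T" and cT: "card T \<le> 10" unfolding T_def
    by (auto intro!: order.trans[OF card_Un_le])
  have sub: "int ` S \<subseteq> T"
  proof
    fix z assume "z \<in> int ` S"
    then obtain m where z: "z = int m" and "m \<in> S" by blast
    then obtain x where xm: "x \<in> dint (i+j) m" and xQ: "x \<in> Q i j" and sub: "dint (i+j) m \<subseteq> dint i n"
      unfolding S_def by blast
    have xn: "x \<in> dint i n" using xm sub by blast
    obtain p :: int where p: "\<bar>N * x - p\<bar> \<le> d" using Q_char[OF xQ] by (auto simp: N_def A_def d_def B_def)
    have x1: "m / (A*B) \<le> x" "x < (real m + 1)/(A*B)" using xm k by (auto simp: dint_mem)
    have x2: "n / A \<le> x" "x < (real n + 1)/A" using xn by (auto simp: dint_mem A_def)
    have "N * (n / A) \<le> N * x" using Npos by (intro mult_left_mono[OF x2(1)]) simp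
    hence "N * n / A - d \<le> p" using p by simp
    hence pge: "p1 \<le> p" unfolding p1_def by (simp add: ceiling_le)
    have "N * x < N * ((real n + 1)/A)" using Npos by (intro mult_strict_left_mono[OF x2(2)])
    also have "\<dots> = N * n / A + N / A" by (simp add: divide_simps algebra_simps)
    finally have "p < N * n / A + N / A + d" using p by simp
    moreover have "N / A < 1" using NA A2 by simp
    moreover have "N * n / A - d \<le> p1" unfolding p1_def by simp
    ultimately have "p < p1 + 2" using d2 by linarith
    hence "p = p1 \<or> p = p1 + 1" using pge by linarith
    moreover have "\<lfloor>c p\<rfloor> \<le> z \<and> z < \<lfloor>c p\<rfloor> + 5"
    proof
      have "p - d \<le> N * x" using p by (simp add: abs_le_iff)
      hence "(p - d) / N \<le> x" using Npos by (simp add: divide_simps mult.commute)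
      hence "(p - d) / N < (real m + 1)/(A*B)" using x1 by linarith
      hence "c p < real m + 1" unfolding c_def using Npos A2 B2 by (simp add: divide_simps mult.commute mult.left_commute)
      hence "\<lfloor>c p\<rfloor> < int m + 1" by linarith
      thus "\<lfloor>c p\<rfloor> \<le> z" using z by simp
      have "N * x \<le> p + d" using p by (simp add: abs_le_iff)
      hence "x \<le> (p + d) / N" using Npos by (simp add: divide_simps mult.commute)
      hence "m / (A*B) \<le> (p + d) / N" using x1 by linarith
      hence "m \<le> (p + d) * (A*B) / N" using Npos A2 B2 by (simp add: divide_simps mult.commute mult.left_commute)
      also have "\<dots> = c p + 2 * (d * B) * A / N" unfolding c_def using Npos by (simp add: divide_simps algebra_simps)
      also have "\<dots> = c p + 2 * A / N" using dB by simp
      also have "\<dots> \<le> c p + 4" using AN Npos by (simp add: divide_simps algebra_simps)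
      finally have "m \<le> c p + 4" .
      hence "real_of_int (int m) < \<lfloor>c p\<rfloor> + 5" by linarith
      thus "z < \<lfloor>c p\<rfloor> + 5" using z by linarith
    qed
    ultimately show "z \<in> T" unfolding T_def by auto
  qed
  have fS: "finite S" using finite_imageD[OF finite_subset[OF sub fT]] by simp
  have "card S = card (int ` S)" by (simp add: card_image)
  also have "\<dots> \<le> card T" using sub fT by (rule card_mono[rotated])
  finally show ?thesis using fS cT unfolding S_def by simp
qed



lemma Dyad_eq: "Dyad k = dint k ` {..<2^k}" by (auto simp: Dyad_def)

lemma dint_unit: assumes "m < 2^k" shows "dint k m \<subseteq> {0..1}"
proof
  fix y assume y: "y \<in> dint k m"
  have "m + 1 \<le> (2::nat)^k" using assms by simp
  hence "real (m + 1) \<le> real ((2::nat)^k)" by (simp only: of_nat_le_iff)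
  hence a: "real m + 1 \<le> 2^k" by simp
  have b: "0 \<le> real m / 2^k" by simp
  have c: "(real m + 1) / 2^k \<le> 1" using a by (simp add: divide_simps)
  have "real m / 2^k \<le> y" "y < (real m + 1) / 2^k" using y by (auto simp: dint_mem)
  thus "y \<in> {0..1}" using b c unfolding atLeastAtMost_iff by linarith
qed

lemma finite_Dyad: "finite (Dyad k)" by (simp add: Dyad_eq)

definition Fn :: "nat \<Rightarrow> nat \<Rightarrow> nat \<Rightarrow> real set set" where
  "Fn i j n = {I \<in> Dyad (i+j). I \<inter> Q i j \<noteq> {} \<and> I \<subseteq> dint i n}"

lemma Fn_props:
  assumes "i \<ge> 1" "j \<ge> 1"
  shows "Fn i j n \<subseteq> Dyad (i+j)" "card (Fn i j n) \<le> 10" "dint i n \<inter> Qhat i j = \<Union>(Fn i j n)"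
proof -
  show "Fn i j n \<subseteq> Dyad (i+j)" by (auto simp: Fn_def)
  define S where "S = {m. dint (i+j) m \<inter> Q i j \<noteq> {} \<and> dint (i+j) m \<subseteq> dint i n}"
  have S: "finite S" "card S \<le> 10" using count_block[OF assms, of n] unfolding S_def by auto
  have "Fn i j n \<subseteq> dint (i+j) ` S" by (auto simp: Fn_def Dyad_def S_def)
  hence "card (Fn i j n) \<le> card (dint (i+j) ` S)" using S by (intro card_mono) auto
  also have "\<dots> \<le> card S" by (rule card_image_le[OF S(1)])
  finally show "card (Fn i j n) \<le> 10" using S by simp
  show "dint i n \<inter> Qhat i j = \<Union>(Fn i j n)"
  proof
    show "\<Union>(Fn i j n) \<subseteq> dint i n \<inter> Qhat i j" by (auto simp: Fn_def Qhat_def)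
    show "dint i n \<inter> Qhat i j \<subseteq> \<Union>(Fn i j n)"
    proof
      fix y assume "y \<in> dint i n \<inter> Qhat i j"
      then obtain m where y: "y \<in> dint i n" "y \<in> dint (i+j) m" "m < 2^(i+j)" "dint (i+j) m \<inter> Q i j \<noteq> {}"
        by (auto simp: Qhat_def Dyad_def)
      have "dint (i+j) m \<subseteq> dint i n" using dyad_nest[OF y(2) y(1)] .
      hence "dint (i+j) m \<in> Fn i j n" using y by (auto simp: Fn_def Dyad_def)
      thus "y \<in> \<Union>(Fn i j n)" using y by blast
    qed
  qed
qed

theorem lemma4p2:
  fixes i j :: nat
  assumes "i \<ge> 1" and "j \<ge> 1"
  defines "M \<equiv> (15 :: nat)"
  shows "(\<forall>J \<in> Dyad i. \<exists>F. F \<subseteq> Dyad (i + j) \<and> card F \<le> M \<and> J \<inter> Qhat i j = \<Union> F)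
    \<and> (\<exists>F. F \<subseteq> Dyad (i + j) \<and> card F \<le> M * 2 ^ i \<and> Qhat i j = \<Union> F)
    \<and> Q i j \<in> sets lebesgue \<and> Qhat i j \<in> sets lebesgue
    \<and> measure lebesgue (Q i j) \<le> measure lebesgue (Qhat i j)
    \<and> measure lebesgue (Qhat i j) \<le> real M * 2 powi (- int j)"
proof -
  have P1: "\<forall>J \<in> Dyad i. \<exists>F. F \<subseteq> Dyad (i + j) \<and> card F \<le> M \<and> J \<inter> Qhat i j = \<Union> F"
  proof
    fix J assume "J \<in> Dyad i"
    then obtain n where J: "J = dint i n" by (auto simp: Dyad_def)
    show "\<exists>F. F \<subseteq> Dyad (i + j) \<and> card F \<le> M \<and> J \<inter> Qhat i j = \<Union> F"
      using Fn_props[OF assms(1,2), of n] J unfolding M_def by (intro exI[of _ "Fn i j n"]) auto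
  qed
  define G where "G = {I \<in> Dyad (i+j). I \<inter> Q i j \<noteq> {}}"
  have GD: "G \<subseteq> Dyad (i+j)" by (auto simp: G_def)
  have fG: "finite G" using finite_subset[OF GD finite_Dyad] .
  have QG: "Qhat i j = \<Union>G" by (simp add: Qhat_def G_def)
  have "G \<subseteq> (\<Union>n\<in>{..<2^i}. Fn i j n)"
  proof
    fix I assume I: "I \<in> G"
    then obtain m where m: "I = dint (i+j) m" "m < 2^(i+j)" by (auto simp: G_def Dyad_def)
    define x :: real where "x = m / 2^(i+j)"
    have xI: "x \<in> I" using m by (simp add: x_def dint_mem divide_simps)
    have "real m < 2^(i+j)" using m(2) by (metis of_nat_less_iff of_nat_numeral of_nat_power)
    hence "0 \<le> x" "x < 1" by (auto simp: x_def divide_simps)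
    then obtain n where n: "n < 2^i" "x \<in> dint i n" using circ_cover by blast
    have "I \<subseteq> dint i n" using dyad_nest[of x i j m n] xI n m by simp
    hence "I \<in> Fn i j n" using I by (auto simp: G_def Fn_def)
    thus "I \<in> (\<Union>n\<in>{..<2^i}. Fn i j n)" using n by blast
  qed
  moreover have "finite (\<Union>n\<in>{..<2^i}. Fn i j n)"
    using Fn_props(1)[OF assms(1,2)] by (intro finite_subset[OF _ finite_Dyad[of "i+j"]]) auto
  ultimately have "card G \<le> card (\<Union>n\<in>{..<2^i}. Fn i j n)" by (rule card_mono[rotated])
  also have "\<dots> \<le> (\<Sum>n<2^i. card (Fn i j n))" by (rule card_UN_le) simp
  also have "\<dots> \<le> (\<Sum>n<(2::nat)^i. 10)" by (rule sum_mono) (use Fn_props(2)[OF assms(1,2)] in auto)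
  finally have cG: "card G \<le> 10 * 2^i" by simp
  have P2: "\<exists>F. F \<subseteq> Dyad (i + j) \<and> card F \<le> M * 2 ^ i \<and> Qhat i j = \<Union> F"
    using GD cG QG unfolding M_def by (intro exI[of _ G]) auto
  have Gs: "G \<subseteq> sets lebesgue" using GD dint_lebesgue(1) by (auto simp: Dyad_def)
  have Qhs: "Qhat i j \<in> sets lebesgue" unfolding QG using fG Gs by (rule sets.finite_Union)
  have Qs: "Q i j \<in> sets lebesgue" using Q_borel by simp
  have "Q i j \<subseteq> Qhat i j"
  proof
    fix x assume xQ: "x \<in> Q i j"
    hence "0 \<le> x" "x < 1" by (auto simp: Q_def circ_def)
    then obtain m where "m < 2^(i+j)" "x \<in> dint (i+j) m" using circ_cover by blast
    thus "x \<in> Qhat i j" using xQ by (auto simp: Qhat_def Dyad_def)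
  qed
  moreover have "Qhat i j \<subseteq> {0..1}"
    using dint_unit by (auto simp: Qhat_def Dyad_def)
  ultimately have m1: "measure lebesgue (Q i j) \<le> measure lebesgue (Qhat i j)"
    using Qs Qhs by (intro measure_mono_fmeasurable fmeasurableI2[OF lmeasurable_interval(1)]) auto
  have "measure lebesgue (Qhat i j) \<le> (\<Sum>I\<in>G. measure lebesgue I)"
    unfolding QG using fG Gs by (intro measure_Union_le) auto
  also have "\<dots> = (\<Sum>I\<in>G. 1 / 2^(i+j))"
    using GD by (intro sum.cong) (auto simp: Dyad_def dint_lebesgue(2))
  also have "\<dots> = card G / 2^(i+j)" by simp
  also have "\<dots> \<le> (10 * 2^i) / 2^(i+j)" using cG by (simp add: divide_simps) (metis of_nat_le_iff of_nat_mult of_nat_numeral of_nat_power)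
  also have "\<dots> = 10 / 2^j" by (simp add: power_add)
  also have "\<dots> \<le> real M * 2 powi (- int j)" by (simp add: M_def power_int_minus_divide divide_simps)
  finally show ?thesis using P1 P2 Qs Qhs m1 by blast
qed


end
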